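(* Let $\pi\colon(X,T)\to(Y,T)$ be a factor map between minimal subshifts. Then either $\pi$ is distal or there exists $y\in Y$ such that the fiber $\pi^{-1}(y)$ contains a right asymptotic pair or a left asymptotic pair.
   Context: A factor map is distal if whenever $\pi(x)=\pi(x')$ and $x\neq x'$, $\inf_{k\in\mathbb{Z}}\mathrm{dist}(T^kx,T^kx')>0$. A pair $(x,\tilde x)\in\mathcal{A}^{\mathbb{Z}}\times\mathcal{A}^{\mathbb{Z}}$ is right asymptotic if there is $k\in\mathbb{Z}$ with $x_{(k,\infty)}=\tilde x_{(k,\infty)}$ and $x_k\neq\tilde x_k$; left asymptotic is defined symmetrically with $(-\infty,k)$. *)

theory Defs
  imports Complex_Main
begin

definition shift :: "(int \<Rightarrow> 'a) \<Rightarrow> (int \<Rightarrow> 'a)" where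
  "shift x = (\<lambda>i. x (i + 1))"

definition shiftk :: "int \<Rightarrow> (int \<Rightarrow> 'a) \<Rightarrow> (int \<Rightarrow> 'a)" where
  "shiftk k x = (\<lambda>i. x (i + k))"

definition sdist :: "(int \<Rightarrow> 'a) \<Rightarrow> (int \<Rightarrow> 'a) \<Rightarrow> real" where
  "sdist x y = (if x = y then 0
     else (1/2) ^ (LEAST n. \<exists>i. \<bar>i\<bar> = int n \<and> x i \<noteq> y i))"

text \<open>Closedness in the product topology (finite alphabet, discrete topology).\<close>
definition shift_closed :: "(int \<Rightarrow> 'a) set \<Rightarrow> bool" where
  "shift_closed X \<longleftrightarrow>
     (\<forall>x. (\<forall>n::int. \<exists>z\<in>X. \<forall>i. \<bar>i\<bar> \<le> n \<longrightarrow> z i = x i) \<longrightarrow> x \<in> X)"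

definition subshift :: "(int \<Rightarrow> 'a::finite) set \<Rightarrow> bool" where
  "subshift X \<longleftrightarrow> X \<noteq> {} \<and> shift_closed X \<and> shift ` X = X"

definition minimal_subshift :: "(int \<Rightarrow> 'a::finite) set \<Rightarrow> bool" where
  "minimal_subshift X \<longleftrightarrow> subshift X \<and> (\<forall>Z. Z \<subseteq> X \<longrightarrow> subshift Z \<longrightarrow> Z = X)"

definition shift_continuous_on ::
    "(int \<Rightarrow> 'a) set \<Rightarrow> ((int \<Rightarrow> 'a) \<Rightarrow> (int \<Rightarrow> 'b)) \<Rightarrow> bool" where
  "shift_continuous_on X \<pi> \<longleftrightarrow>
     (\<forall>x\<in>X. \<forall>n::int. \<exists>m::int. \<forall>x'\<in>X.
        (\<forall>i. \<bar>i\<bar> \<le> m \<longrightarrow> x' i = x i) \<longrightarrow> (\<forall>i. \<bar>i\<bar> \<le> n \<longrightarrow> \<pi> x' i = \<pi> x i))"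

definition factor_map ::
    "((int \<Rightarrow> 'a) \<Rightarrow> (int \<Rightarrow> 'b)) \<Rightarrow> (int \<Rightarrow> 'a) set \<Rightarrow> (int \<Rightarrow> 'b) set \<Rightarrow> bool" where
  "factor_map \<pi> X Y \<longleftrightarrow> \<pi> ` X = Y \<and> shift_continuous_on X \<pi>
     \<and> (\<forall>x\<in>X. \<pi> (shift x) = shift (\<pi> x))"

definition distal_factor ::
    "((int \<Rightarrow> 'a) \<Rightarrow> (int \<Rightarrow> 'b)) \<Rightarrow> (int \<Rightarrow> 'a) set \<Rightarrow> bool" where
  "distal_factor \<pi> X \<longleftrightarrow>
     (\<forall>x\<in>X. \<forall>x'\<in>X. \<pi> x = \<pi> x' \<and> x \<noteq> x' \<longrightarrow>
        (INF k. sdist (shiftk k x) (shiftk k x')) > 0)"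

definition right_asymptotic :: "(int \<Rightarrow> 'a) \<Rightarrow> (int \<Rightarrow> 'a) \<Rightarrow> bool" where
  "right_asymptotic x x' \<longleftrightarrow> (\<exists>k. (\<forall>i>k. x i = x' i) \<and> x k \<noteq> x' k)"

definition left_asymptotic :: "(int \<Rightarrow> 'a) \<Rightarrow> (int \<Rightarrow> 'a) \<Rightarrow> bool" where
  "left_asymptotic x x' \<longleftrightarrow> (\<exists>k. (\<forall>i<k. x i = x' i) \<and> x k \<noteq> x' k)"

end

theory Submission
  imports Defs "HOL-Library.Infinite_Set"
begin

definition refine :: "(nat \<Rightarrow> int \<Rightarrow> 'c) \<Rightarrow> nat \<Rightarrow> nat set \<Rightarrow> nat set" where
  "refine w m S = {n\<in>S. map (w n) [-int m..int m] =
     (SOME p. infinite {n\<in>S. map (w n) [-int m..int m] = p})}"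

lemma refine_props:
  fixes w :: "nat \<Rightarrow> int \<Rightarrow> 'c::finite"
  assumes "infinite S"
  shows "infinite (refine w m S) \<and> refine w m S \<subseteq> S \<and>
    (\<forall>n\<in>refine w m S. \<forall>n'\<in>refine w m S. \<forall>i. \<bar>i\<bar> \<le> int m \<longrightarrow> w n i = w n' i)"
proof -
  let ?L = "\<lambda>n. map (w n) [-int m..int m]"
  have "?L ` S \<subseteq> {xs. set xs \<subseteq> UNIV \<and> length xs = length [-int m..int m]}" by auto
  hence "finite (?L ` S)" by (rule finite_subset) (rule finite_lists_length_eq, simp)
  from pigeonhole_infinite[OF assms this] obtain a0 where "infinite {a\<in>S. ?L a = ?L a0}" by blast
  hence ex: "\<exists>p. infinite {n\<in>S. ?L n = p}" by blast
  have inf: "infinite (refine w m S)" unfolding refine_def using someI_ex[OF ex] .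
  have agree: "w n i = w n' i" if "n \<in> refine w m S" "n' \<in> refine w m S" "\<bar>i\<bar> \<le> int m" for n n' i
  proof -
    from that have "?L n = ?L n'" unfolding refine_def by auto
    moreover have "i \<in> set [-int m..int m]" using that(3) by auto
    ultimately show ?thesis by (metis map_eq_conv)
  qed
  have sub: "refine w m S \<subseteq> S" unfolding refine_def by blast
  show ?thesis using inf agree sub by blast
qed

primrec seqS :: "(nat \<Rightarrow> int \<Rightarrow> 'c) \<Rightarrow> nat \<Rightarrow> nat set" where
  "seqS w 0 = refine w 0 UNIV"
| "seqS w (Suc m) = refine w (Suc m) (seqS w m)"

lemma seqS_inf: "infinite (seqS (w :: nat \<Rightarrow> int \<Rightarrow> 'c::finite) m)"
proof (induction m)
  case 0 show ?case using refine_props[OF infinite_UNIV_nat, of w 0] by simp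
next
  case (Suc m) show ?case using refine_props[OF Suc.IH, of w "Suc m"] by simp
qed

lemma seqS_sub: "seqS (w :: nat \<Rightarrow> int \<Rightarrow> 'c::finite) (Suc m) \<subseteq> seqS w m"
  using refine_props[OF seqS_inf[of w m], of w "Suc m"] by simp

lemma seqS_mono: "m \<le> m' \<Longrightarrow> seqS (w :: nat \<Rightarrow> int \<Rightarrow> 'c::finite) m' \<subseteq> seqS w m"
proof (induction m' rule: dec_induct)
  case base show ?case by simp
next
  case (step k) thus ?case using seqS_sub[of w k] by blast
qed

lemma seqS_agree:
  fixes w :: "nat \<Rightarrow> int \<Rightarrow> 'c::finite"
  assumes "n \<in> seqS w m" "n' \<in> seqS w m" "\<bar>i\<bar> \<le> int m"
  shows "w n i = w n' i"
proof (cases m)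
  case 0
  hence "n \<in> refine w 0 UNIV" "n' \<in> refine w 0 UNIV" "\<bar>i\<bar> \<le> int 0" using assms by simp_all
  thus ?thesis using refine_props[OF infinite_UNIV_nat, of w 0] by blast
next
  case (Suc k)
  hence "n \<in> refine w (Suc k) (seqS w k)" "n' \<in> refine w (Suc k) (seqS w k)" "\<bar>i\<bar> \<le> int (Suc k)"
    using assms by simp_all
  thus ?thesis using refine_props[OF seqS_inf[of w k], of w "Suc k"] by blast
qed

lemma compact_seq:
  fixes w :: "nat \<Rightarrow> int \<Rightarrow> 'c::finite"
  shows "\<exists>v. \<forall>m::nat. \<exists>n\<ge>m. \<forall>i. \<bar>i\<bar> \<le> int m \<longrightarrow> w n i = v i"
proof -
  define v where "v i = w (SOME n. n \<in> seqS w (nat \<bar>i\<bar>)) i" for i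
  have "\<exists>n\<ge>m. \<forall>i. \<bar>i\<bar> \<le> int m \<longrightarrow> w n i = v i" for m
  proof -
    obtain n where n: "n \<in> seqS w m" "n \<ge> m"
      using seqS_inf[of w m] by (meson infinite_nat_iff_unbounded_le)
    have "w n i = v i" if "\<bar>i\<bar> \<le> int m" for i
    proof -
      have ne: "\<exists>n. n \<in> seqS w (nat \<bar>i\<bar>)" using seqS_inf[of w "nat \<bar>i\<bar>"] by (metis ex_in_conv finite.emptyI)
      have "nat \<bar>i\<bar> \<le> m" using that by linarith
      hence "n \<in> seqS w (nat \<bar>i\<bar>)" using seqS_mono[of "nat \<bar>i\<bar>" m w] n by blast
      thus ?thesis unfolding v_def using seqS_agree[OF _ someI_ex[OF ne], of n i] by auto
    qed
    thus ?thesis using n by blast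
  qed
  thus ?thesis by blast
qed

lemma shiftk_add: "shiftk a (shiftk b x) = shiftk (a+b) x"
  by (simp add: shiftk_def ac_simps)

lemma shift_eq: "shift x = shiftk 1 x"
  by (simp add: shift_def shiftk_def)

lemma shiftk_inv:
  assumes X: "subshift X" and F: "\<forall>x\<in>X. \<pi> (shift x) = shift (\<pi> x)"
  shows "x \<in> X \<Longrightarrow> shiftk k x \<in> X \<and> \<pi> (shiftk k x) = shiftk k (\<pi> x)"
proof (induction k arbitrary: x rule: int_induct[where k=0])
  case base thus ?case by (simp add: shiftk_def)
next
  case (step1 i)
  have "shiftk (i+1) x = shift (shiftk i x)" by (simp add: shift_eq shiftk_add add.commute)
  moreover have "shiftk (i+1) (\<pi> x) = shift (shiftk i (\<pi> x))" by (simp add: shift_eq shiftk_add add.commute)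
  ultimately show ?case using step1 X F unfolding subshift_def by auto
next
  case (step2 i)
  have xi: "shiftk i x \<in> X" "\<pi> (shiftk i x) = shiftk i (\<pi> x)" using step2 by auto
  then obtain z where z: "z \<in> X" "shiftk i x = shift z" using X unfolding subshift_def by auto
  have zeq: "z = shiftk (i - 1) x"
  proof
    fix j
    have "shiftk i x (j - 1) = z j" using z(2) by (simp add: shift_def)
    thus "z j = shiftk (i - 1) x j" by (simp add: shiftk_def algebra_simps)
  qed
  have "shift (\<pi> z) = shiftk i (\<pi> x)" using F z xi by auto
  have "\<pi> z = shiftk (i - 1) (\<pi> x)"
  proof
    fix j
    have "shift (\<pi> z) (j - 1) = shiftk i (\<pi> x) (j - 1)" using \<open>shift (\<pi> z) = shiftk i (\<pi> x)\<close> by simp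
    thus "\<pi> z j = shiftk (i - 1) (\<pi> x) j" by (simp add: shift_def shiftk_def algebra_simps)
  qed
  thus ?case using z zeq by auto
qed

lemma last_before:
  fixes P :: "int \<Rightarrow> bool"
  assumes "P i" "i < a"
  shows "\<exists>d<a. P d \<and> (\<forall>j. d < j \<and> j < a \<longrightarrow> \<not> P j)"
proof -
  define S where "S = {m::nat. P (a - 1 - int m)}"
  have "nat (a - 1 - i) \<in> S" using assms by (simp add: S_def)
  hence LS: "(LEAST m. m \<in> S) \<in> S" by (rule LeastI)
  let ?m = "LEAST m. m \<in> S"
  show ?thesis
  proof (intro exI conjI allI impI)
    show "a - 1 - int ?m < a" by simp
    show "P (a - 1 - int ?m)" using LS by (simp add: S_def)
    fix j assume j: "a - 1 - int ?m < j \<and> j < a"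
    hence "nat (a - 1 - j) < ?m" by linarith
    hence "nat (a - 1 - j) \<notin> S" using not_less_Least by blast
    thus "\<not> P j" using j by (simp add: S_def)
  qed
qed

lemma first_after:
  fixes P :: "int \<Rightarrow> bool"
  assumes "P i" "\<forall>j. P j \<longrightarrow> b \<le> j"
  shows "\<exists>k. P k \<and> (\<forall>j<k. \<not> P j)"
proof -
  define S where "S = {m::nat. P (b + int m)}"
  have "i \<ge> b" using assms by auto
  hence "nat (i - b) \<in> S" using assms by (simp add: S_def)
  hence LS: "(LEAST m. m \<in> S) \<in> S" by (rule LeastI)
  let ?m = "LEAST m. m \<in> S"
  show ?thesis
  proof (intro exI conjI allI impI)
    show "P (b + int ?m)" using LS by (simp add: S_def)
    fix j assume j: "j < b + int ?m"
    show "\<not> P j"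
    proof
      assume pj: "P j"
      hence "j \<ge> b" using assms by auto
      hence "nat (j - b) < ?m" using j by linarith
      hence "nat (j - b) \<notin> S" using not_less_Least by blast
      thus False using pj \<open>j \<ge> b\<close> by (simp add: S_def)
    qed
  qed
qed

lemma sdist_small:
  assumes "sdist x y < (1/2) ^ n"
  shows "\<forall>i. \<bar>i\<bar> \<le> int n \<longrightarrow> x i = y i"
proof (cases "x = y")
  case False
  let ?L = "LEAST n. \<exists>i. \<bar>i\<bar> = int n \<and> x i \<noteq> y i"
  have "((1::real)/2) ^ ?L < (1/2) ^ n" using assms False by (simp add: sdist_def)
  hence "n < ?L" by (simp add: power_strict_decreasing_iff)
  show ?thesis
  proof (intro allI impI)
    fix i assume "\<bar>i\<bar> \<le> int n"
    show "x i = y i"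
    proof (rule ccontr)
    assume "x i \<noteq> y i"
    hence "\<exists>i'. \<bar>i'\<bar> = int (nat \<bar>i\<bar>) \<and> x i' \<noteq> y i'" by (intro exI[of _ i]) simp
    hence "?L \<le> nat \<bar>i\<bar>" by (rule Least_le)
    thus False using \<open>n < ?L\<close> \<open>\<bar>i\<bar> \<le> int n\<close> by linarith
  qed
  qed
qed simp

lemma sdist_nonneg: "sdist x y \<ge> 0"
  by (simp add: sdist_def)

theorem lemma6p4:
  fixes \<pi> :: "(int \<Rightarrow> 'a::finite) \<Rightarrow> (int \<Rightarrow> 'b::finite)"
    and X :: "(int \<Rightarrow> 'a) set" and Y :: "(int \<Rightarrow> 'b) set"
  assumes "minimal_subshift X" and "minimal_subshift Y" and "factor_map \<pi> X Y"
  shows "distal_factor \<pi> X \<or>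
    (\<exists>y\<in>Y. \<exists>x\<in>X. \<exists>x'\<in>X. \<pi> x = y \<and> \<pi> x' = y \<and>
        (right_asymptotic x x' \<or> left_asymptotic x x'))"
proof (cases "distal_factor \<pi> X")
  case True thus ?thesis by (rule disjI1)
next
  case False
  from False obtain x x' where xX: "x \<in> X" "x' \<in> X" and pe: "\<pi> x = \<pi> x'" and ne: "x \<noteq> x'"
    and inf: "\<not> (INF k. sdist (shiftk k x) (shiftk k x')) > 0"
    unfolding distal_factor_def by blast
  have sub: "subshift X" using assms(1) unfolding minimal_subshift_def by blast
  have F: "\<forall>x\<in>X. \<pi> (shift x) = shift (\<pi> x)" and cont: "shift_continuous_on X \<pi>"
    and img: "\<pi> ` X = Y" using assms(3) unfolding factor_map_def by blast+
  have closed: "shift_closed X" using sub unfolding subshift_def by blast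
  note inv = shiftk_inv[OF sub F]
  have win: "\<exists>k. \<forall>i. \<bar>i\<bar> \<le> int n \<longrightarrow> x (i + k) = x' (i + k)" for n :: nat
  proof -
    have bdd: "bdd_below (range (\<lambda>k. sdist (shiftk k x) (shiftk k x')))"
      by (rule bdd_belowI[of _ 0]) (auto simp: sdist_nonneg)
    have l0: "(INF k. sdist (shiftk k x) (shiftk k x')) \<le> 0"
      using inf by linarith
    have "(0::real) < (1/2)^n" by simp
    hence lt: "(INF k. sdist (shiftk k x) (shiftk k x')) < (1/2)^n" using l0 by linarith
    obtain k where "sdist (shiftk k x) (shiftk k x') < (1/2)^n"
      using iffD1[OF cINF_less_iff[of UNIV, OF UNIV_not_empty bdd] lt] by blast
    from sdist_small[OF this] have "\<forall>i. \<bar>i\<bar> \<le> int n \<longrightarrow> x (i + k) = x' (i + k)"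
      unfolding shiftk_def by simp
    thus ?thesis by blast
  qed
  obtain i0 where i0: "x i0 \<noteq> x' i0" using ne by blast
  have pY: "\<pi> x \<in> Y" using img xX by blast
  have "\<exists>y\<in>Y. \<exists>x\<in>X. \<exists>x'\<in>X. \<pi> x = y \<and> \<pi> x' = y \<and>
        (right_asymptotic x x' \<or> left_asymptotic x x')"
  proof (cases "\<exists>b. \<forall>j. x j \<noteq> x' j \<longrightarrow> b \<le> j")
    case True
    then obtain b where "\<forall>j. x j \<noteq> x' j \<longrightarrow> b \<le> j" by blast
    from first_after[of "\<lambda>j. x j \<noteq> x' j", OF i0 this]
    have la: "left_asymptotic x x'" unfolding left_asymptotic_def by blast
    show ?thesis
      by (rule bexI[OF _ pY], rule bexI[OF _ xX(1)], rule bexI[OF _ xX(2)]) (use pe la in simp)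
  next
    case False
    have "\<exists>d. x d \<noteq> x' d \<and> (\<forall>j. d < j \<and> j \<le> d + int n \<longrightarrow> x j = x' j)" for n :: nat
    proof -
      obtain k where k: "\<forall>i. \<bar>i\<bar> \<le> int n \<longrightarrow> x (i + k) = x' (i + k)" using win by blast
      have "\<not> (\<forall>j. x j \<noteq> x' j \<longrightarrow> k - int n \<le> j)" using False by blast
      then obtain i where i0: "x i \<noteq> x' i" "\<not> k - int n \<le> i" by blast
      hence i: "x i \<noteq> x' i" "i < k - int n" by simp_all
      from last_before[of "\<lambda>j. x j \<noteq> x' j", OF i]
      obtain d where d: "d < k - int n" "x d \<noteq> x' d" "\<forall>j. d < j \<and> j < k - int n \<longrightarrow> x j = x' j"
        by blast
      have "x j = x' j" if "d < j" "j \<le> d + int n" for j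
      proof (cases "j < k - int n")
        case True thus ?thesis using d(3) that by blast
      next
        case False
        hence "\<bar>j - k\<bar> \<le> int n" using that d by linarith
        thus ?thesis using k[rule_format, of "j - k"] by simp
      qed
      thus ?thesis using d by blast
    qed
    then obtain dd where dd: "\<And>n. x (dd n) \<noteq> x' (dd n)"
      "\<And>n j. dd n < j \<Longrightarrow> j \<le> dd n + int n \<Longrightarrow> x j = x' j" by metis
    define u where "u n = shiftk (dd n) x" for n
    define u' where "u' n = shiftk (dd n) x'" for n
    have uX: "u n \<in> X" "u' n \<in> X" for n
      using inv[OF xX(1), of "dd n"] inv[OF xX(2), of "dd n"] unfolding u_def u'_def by blast+
    have upi: "\<pi> (u n) = \<pi> (u' n)" for n
      using inv[OF xX(1), of "dd n"] inv[OF xX(2), of "dd n"] pe unfolding u_def u'_def by simp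
    obtain v where v: "\<forall>m::nat. \<exists>n\<ge>m. \<forall>i. \<bar>i\<bar> \<le> int m \<longrightarrow> (u n i, u' n i) = v i"
      using compact_seq[of "\<lambda>n i. (u n i, u' n i)"] by blast
    define a where "a i = fst (v i)" for i
    define a' where "a' i = snd (v i)" for i
    have va: "\<exists>n\<ge>m. \<forall>i. \<bar>i\<bar> \<le> int m \<longrightarrow> u n i = a i \<and> u' n i = a' i" for m
    proof -
      obtain n where n: "n \<ge> m" "\<forall>i. \<bar>i\<bar> \<le> int m \<longrightarrow> (u n i, u' n i) = v i" using v by blast
      have "\<forall>i. \<bar>i\<bar> \<le> int m \<longrightarrow> u n i = a i \<and> u' n i = a' i"
      proof (intro allI impI)
        fix i assume "\<bar>i\<bar> \<le> int m"
        hence "(u n i, u' n i) = v i" using n by blast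
        thus "u n i = a i \<and> u' n i = a' i" unfolding a_def a'_def by (metis fst_conv snd_conv)
      qed
      thus ?thesis using n by blast
    qed
    have approx: "\<exists>n. \<forall>i. \<bar>i\<bar> \<le> N \<longrightarrow> u n i = a i \<and> u' n i = a' i" for N :: int
    proof -
      obtain n where n: "\<forall>i. \<bar>i\<bar> \<le> int (nat N) \<longrightarrow> u n i = a i \<and> u' n i = a' i" using va by blast
      have "\<forall>i. \<bar>i\<bar> \<le> N \<longrightarrow> u n i = a i \<and> u' n i = a' i"
      proof (intro allI impI)
        fix i assume "\<bar>i\<bar> \<le> N"
        hence "\<bar>i\<bar> \<le> int (nat N)" by linarith
        thus "u n i = a i \<and> u' n i = a' i" using n by blast
      qed
      thus ?thesis by blast
    qed
    have aX: "a \<in> X" "a' \<in> X"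
    proof -
      have "\<forall>N::int. \<exists>z\<in>X. \<forall>i. \<bar>i\<bar> \<le> N \<longrightarrow> z i = a i"
      proof
        fix N :: int
        obtain n where "\<forall>i. \<bar>i\<bar> \<le> N \<longrightarrow> u n i = a i \<and> u' n i = a' i" using approx by blast
        hence "\<forall>i. \<bar>i\<bar> \<le> N \<longrightarrow> u n i = a i" by blast
        thus "\<exists>z\<in>X. \<forall>i. \<bar>i\<bar> \<le> N \<longrightarrow> z i = a i" using uX(1) by blast
      qed
      thus "a \<in> X" using closed unfolding shift_closed_def by blast
      have "\<forall>N::int. \<exists>z\<in>X. \<forall>i. \<bar>i\<bar> \<le> N \<longrightarrow> z i = a' i"
      proof
        fix N :: int
        obtain n where "\<forall>i. \<bar>i\<bar> \<le> N \<longrightarrow> u n i = a i \<and> u' n i = a' i" using approx by blast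
        hence "\<forall>i. \<bar>i\<bar> \<le> N \<longrightarrow> u' n i = a' i" by blast
        thus "\<exists>z\<in>X. \<forall>i. \<bar>i\<bar> \<le> N \<longrightarrow> z i = a' i" using uX(2) by blast
      qed
      thus "a' \<in> X" using closed unfolding shift_closed_def by blast
    qed
    have api: "\<pi> a = \<pi> a'"
    proof
      fix i
      obtain M where M: "\<forall>z\<in>X. (\<forall>j. \<bar>j\<bar> \<le> M \<longrightarrow> z j = a j) \<longrightarrow> (\<forall>j. \<bar>j\<bar> \<le> \<bar>i\<bar> \<longrightarrow> \<pi> z j = \<pi> a j)"
        using cont aX(1) unfolding shift_continuous_on_def by blast
      obtain M' where M': "\<forall>z\<in>X. (\<forall>j. \<bar>j\<bar> \<le> M' \<longrightarrow> z j = a' j) \<longrightarrow> (\<forall>j. \<bar>j\<bar> \<le> \<bar>i\<bar> \<longrightarrow> \<pi> z j = \<pi> a' j)"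
        using cont aX(2) unfolding shift_continuous_on_def by blast
      obtain n where n: "\<forall>j. \<bar>j\<bar> \<le> max M M' \<longrightarrow> u n j = a j \<and> u' n j = a' j"
        using approx by blast
      have "\<forall>j. \<bar>j\<bar> \<le> M \<longrightarrow> u n j = a j" using n by simp
      hence "\<pi> (u n) i = \<pi> a i" using M uX(1) by blast
      moreover have "\<forall>j. \<bar>j\<bar> \<le> M' \<longrightarrow> u' n j = a' j" using n by simp
      hence "\<pi> (u' n) i = \<pi> a' i" using M' uX(2) by blast
      ultimately show "\<pi> a i = \<pi> a' i" using upi by simp
    qed
    have "right_asymptotic a a'" unfolding right_asymptotic_def
    proof (rule exI[of _ 0], intro conjI allI impI)
      obtain n where "\<forall>j. \<bar>j\<bar> \<le> 0 \<longrightarrow> u n j = a j \<and> u' n j = a' j" using approx by blast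
      hence "u n 0 = a 0" "u' n 0 = a' 0" by simp_all
      thus "a 0 \<noteq> a' 0" using dd(1)[of n] by (simp add: u_def u'_def shiftk_def)
    next
      fix i :: int assume "i > 0"
      obtain n where n: "n \<ge> nat i" "\<forall>j. \<bar>j\<bar> \<le> int (nat i) \<longrightarrow> u n j = a j \<and> u' n j = a' j"
        using va by blast
      have "\<bar>i\<bar> \<le> int (nat i)" using \<open>i > 0\<close> by simp
      hence "u n i = a i" "u' n i = a' i" using n(2) by blast+
      moreover have "x (i + dd n) = x' (i + dd n)" using dd(2)[of n "i + dd n"] n(1) \<open>i > 0\<close> by simp
      ultimately show "a i = a' i" by (simp add: u_def u'_def shiftk_def)
    qed
    hence ra: "right_asymptotic a a'" .
    have aY: "\<pi> a \<in> Y" using img aX(1) by blast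
    show ?thesis
      by (rule bexI[OF _ aY], rule bexI[OF _ aX(1)], rule bexI[OF _ aX(2)]) (use api ra in simp)
  qed
  thus ?thesis by (rule disjI2)
qed

end
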